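(* Let $F$ be a field and let $f=\sum_{\sigma\in S_d}\lambda_\sigma x_{\sigma(1)}\cdots x_{\sigma(d)}\in F\langle X\rangle$ be a multilinear polynomial of degree $d\ge 2$ such that $\sum_{\sigma\in S_d}\lambda_\sigma=0$ and $\sum_{\sigma\in S_d,\ \sigma^{-1}(1)<\sigma^{-1}(2)}\lambda_\sigma\neq 0$. Let $\mathcal A$ be a unital $F$-algebra and let $\phi:\mathcal A\to\mathcal A$ be a linear map that preserves zeros of $f$ and satisfies $\phi(1)\in F^*\cdot 1$. If $a,b\in\mathcal A$ satisfy $ab=ba=0$, then $\phi(a)\phi(b)=\phi(b)\phi(a)$.
   Context: $F\langle X\rangle$ is the free algebra over $F$ in noncommuting indeterminates $x_1,x_2,\ldots$. A map $\phi$ on an $F$-algebra $\mathcal A$ preserves zeros of $f$ if for all $a_1,\ldots,a_d\in\mathcal A$, $f(a_1,\ldots,a_d)=0$ implies $f(\phi(a_1),\ldots,\phi(a_d))=0$. *)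

theory Defs
  imports "HOL-Combinatorics.Permutations"
begin

definition unital_algebra :: "('k::field \<Rightarrow> 'a::ring_1 \<Rightarrow> 'a) \<Rightarrow> bool" where
  "unital_algebra sm \<longleftrightarrow>
     (\<forall>c x y. sm c (x + y) = sm c x + sm c y) \<and>
     (\<forall>c d x. sm (c + d) x = sm c x + sm d x) \<and>
     (\<forall>c d x. sm (c * d) x = sm c (sm d x)) \<and>
     (\<forall>x. sm 1 x = x) \<and>
     (\<forall>c x y. sm c (x * y) = sm c x * y) \<and>
     (\<forall>c x y. sm c (x * y) = x * sm c y)"

definition linear_map :: "('k::field \<Rightarrow> 'a::ring_1 \<Rightarrow> 'a) \<Rightarrow> ('a \<Rightarrow> 'a) \<Rightarrow> bool" where
  "linear_map sm \<phi> \<longleftrightarrow> (\<forall>x y. \<phi> (x + y) = \<phi> x + \<phi> y) \<and> (\<forall>c x. \<phi> (sm c x) = sm c (\<phi> x))"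

definition eval_multilinear ::
  "('k::field \<Rightarrow> 'a::ring_1 \<Rightarrow> 'a) \<Rightarrow> nat \<Rightarrow> ((nat \<Rightarrow> nat) \<Rightarrow> 'k) \<Rightarrow> (nat \<Rightarrow> 'a) \<Rightarrow> 'a" where
  "eval_multilinear sm d lam a =
     (\<Sum>\<sigma>\<in>{\<sigma>. \<sigma> permutes {1..d}}. sm (lam \<sigma>) (prod_list (map (\<lambda>i. a (\<sigma> i)) [1..<d+1])))"

definition preserves_zeros ::
  "('k::field \<Rightarrow> 'a::ring_1 \<Rightarrow> 'a) \<Rightarrow> nat \<Rightarrow> ((nat \<Rightarrow> nat) \<Rightarrow> 'k) \<Rightarrow> ('a \<Rightarrow> 'a) \<Rightarrow> bool" where
  "preserves_zeros sm d lam \<phi> \<longleftrightarrow>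
     (\<forall>a. eval_multilinear sm d lam a = 0 \<longrightarrow> eval_multilinear sm d lam (\<phi> \<circ> a) = 0)"

end

theory Submission
  imports Defs
begin

lemma ua_facts:
  assumes "unital_algebra sm"
  shows "sm c (x + y) = sm c x + sm c y" "sm (c + d) x = sm c x + sm d x"
    "sm (c * d) x = sm c (sm d x)" "sm 1 x = x" "sm c (x * y) = sm c x * y"
    "sm c (x * y) = x * sm c y"
  using assms unfolding unital_algebra_def by blast+

lemma ua_zero:
  assumes "unital_algebra sm"
  shows "sm c 0 = 0" "sm 0 x = 0"
proof -
  have "sm c (0 + 0) = sm c 0 + sm c 0" using ua_facts(1)[OF assms] .
  then show "sm c 0 = 0" by simp
  have "sm (0 + 0) x = sm 0 x + sm 0 x" using ua_facts(2)[OF assms] .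
  then show "sm 0 x = 0" by simp
qed

lemma ua_neg:
  assumes "unital_algebra sm"
  shows "sm (- c) x = - sm c x" "sm c (x - y) = sm c x - sm c y"
proof -
  have "sm (- c + c) x = sm (-c) x + sm c x" using ua_facts(2)[OF assms] .
  then show "sm (- c) x = - sm c x" using ua_zero[OF assms]
    by (simp add: eq_neg_iff_add_eq_0)
  have "sm c (x - y + y) = sm c (x - y) + sm c y" using ua_facts(1)[OF assms] .
  then show "sm c (x - y) = sm c x - sm c y" by (simp add: algebra_simps)
qed

lemma ua_sum:
  assumes "unital_algebra sm" 
  shows "(\<Sum>s\<in>S. sm (g s) z) = sm (\<Sum>s\<in>S. g s) z"
proof (induction S rule: infinite_finite_induct)
  case (infinite A) then show ?case using ua_zero[OF assms] by simp
next
  case empty then show ?case using ua_zero[OF assms] by simp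
next
  case (insert s F) then show ?case using ua_facts(2)[OF assms] by simp
qed

lemma prod_split:
  assumes "unital_algebra sm"
  shows "prod_list (map (\<lambda>i. if i = 1 then x else if i = 2 then y else sm c 1) L) =
    sm (c ^ length (filter (\<lambda>i. \<not> (i = 1 \<or> i = (2::nat))) L))
      (prod_list (map (\<lambda>i. if i = 1 then x else if i = 2 then y else sm c 1) (filter (\<lambda>i. i = 1 \<or> i = 2) L)))"
proof (induction L)
  case Nil then show ?case using ua_facts(4)[OF assms] by simp
next
  case (Cons i L)
  show ?case
  proof (cases "i = 1 \<or> i = 2")
    case True
    then show ?thesis using Cons ua_facts(6)[OF assms] by auto
  next
    case False
    then show ?thesis using Cons ua_facts(3,5)[OF assms] ua_facts(4)[OF assms]
      by (simp add: ua_facts(5)[OF assms, symmetric])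
  qed
qed


lemma filter_perm:
  assumes "\<sigma> permutes {1..d}" "d \<ge> 2"
  shows "filter (\<lambda>i. i = 1 \<or> i = (2::nat)) (map \<sigma> [1..<d+1]) =
    (if inv \<sigma> 1 < inv \<sigma> 2 then [1,2] else [2,1])"
proof -
  define p where "p = inv \<sigma> 1"
  define q where "q = inv \<sigma> 2"
  have iv: "inv \<sigma> permutes {1..d}" using assms(1) by (rule permutes_inv)
  have p: "p \<in> {1..d}" unfolding p_def using permutes_in_image[OF iv] assms(2) by auto
  have q: "q \<in> {1..d}" unfolding q_def using permutes_in_image[OF iv] assms(2) by auto
  have pq: "p \<noteq> q" unfolding p_def q_def using permutes_inj[OF iv] by (metis inj_eq numeral_One numeral_eq_iff semiring_norm(85))
  have e: "\<And>j. (\<sigma> j = 1 \<or> \<sigma> j = 2) \<longleftrightarrow> (j = p \<or> j = q)"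
    unfolding p_def q_def using assms(1)
    by (metis permutes_inverses(1) permutes_inverses(2))
  have "filter (\<lambda>i. i = 1 \<or> i = (2::nat)) (map \<sigma> [1..<d+1]) = map \<sigma> (filter (\<lambda>j. j = p \<or> j = q) [1..<d+1])"
    unfolding filter_map by (rule arg_cong[where f="map \<sigma>"], rule filter_cong) (rule refl, unfold comp_def, rule e)
  moreover have "filter (\<lambda>j. j = p \<or> j = q) [1..<d+1] = (if p < q then [p,q] else [q,p])"
  proof (rule sorted_distinct_set_unique)
    show "sorted (filter (\<lambda>j. j = p \<or> j = q) [1..<d+1])" using sorted_filter[where f=id and xs="[1..<d+1]"] by (simp del: upt_Suc)
    show "distinct (filter (\<lambda>j. j = p \<or> j = q) [1..<d+1])" by simp
    show "sorted (if p < q then [p,q] else [q,p])" using pq by auto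
    show "distinct (if p < q then [p,q] else [q,p])" using pq by auto
    show "set (filter (\<lambda>j. j = p \<or> j = q) [1..<d+1]) = set (if p < q then [p,q] else [q,p])"
      using p q by auto
  qed
  moreover have "\<sigma> p = 1" "\<sigma> q = 2" unfolding p_def q_def using assms(1)
    by (simp_all add: permutes_inverses(1))
  ultimately show ?thesis unfolding p_def[symmetric] q_def[symmetric] by auto
qed

lemma prod_perm:
  assumes "unital_algebra sm" "\<sigma> permutes {1..d}" "d \<ge> 2"
  shows "prod_list (map (\<lambda>i. (\<lambda>i. if i = 1 then x else if i = 2 then y else sm c 1) (\<sigma> i)) [1..<d+1]) =
    sm (c ^ (d - 2)) (if inv \<sigma> 1 < inv \<sigma> 2 then x * y else y * x)"
proof -
  let ?B = "\<lambda>i. if i = 1 then x else if i = 2 then y else sm c 1"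
  let ?L = "map \<sigma> [1..<d+1]"
  have f: "filter (\<lambda>i. i = 1 \<or> i = (2::nat)) ?L = (if inv \<sigma> 1 < inv \<sigma> 2 then [1,2] else [2,1])"
    using filter_perm[OF assms(2,3)] .
  have "length (filter (\<lambda>i. i = 1 \<or> i = (2::nat)) ?L) + length (filter (\<lambda>i. \<not> (i = 1 \<or> i = (2::nat))) ?L) = d"
    using sum_length_filter_compl[of "\<lambda>i. i = 1 \<or> i = (2::nat)" ?L] by (simp only: length_map length_upt)
  then have l: "length (filter (\<lambda>i. \<not> (i = 1 \<or> i = (2::nat))) ?L) = d - 2"
    using f by (metis (no_types, lifting) add_diff_cancel_left' length_Cons list.size(3) numeral_2_eq_2 add_0)
  have "prod_list (map (\<lambda>i. ?B (\<sigma> i)) [1..<d+1]) = prod_list (map ?B ?L)"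
    by (simp add: o_def)
  also have "\<dots> = sm (c ^ (d-2)) (prod_list (map ?B (filter (\<lambda>i. i = 1 \<or> i = 2) ?L)))"
    using prod_split[OF assms(1), of x y c ?L] l by simp
  also have "\<dots> = sm (c ^ (d - 2)) (if inv \<sigma> 1 < inv \<sigma> 2 then x * y else y * x)"
    using f by simp
  finally show ?thesis .
qed

lemma ua_sum2:
  assumes "unital_algebra sm" 
  shows "(\<Sum>s\<in>S. sm k (g s)) = sm k (\<Sum>s\<in>S. g s)"
proof (induction S rule: infinite_finite_induct)
  case (infinite A) then show ?case using ua_zero[OF assms] by simp
next
  case empty then show ?case using ua_zero[OF assms] by simp
next
  case (insert s F) then show ?case using ua_facts(1)[OF assms] by simp
qed

theorem lemma3p4:
  fixes sm :: "'k::field \<Rightarrow> 'a::ring_1 \<Rightarrow> 'a"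
    and lam :: "(nat \<Rightarrow> nat) \<Rightarrow> 'k"
    and \<phi> :: "'a \<Rightarrow> 'a"
    and d :: nat and a b :: 'a
  assumes "unital_algebra sm"
    and "d \<ge> 2"
    and "(\<Sum>\<sigma>\<in>{\<sigma>. \<sigma> permutes {1..d}}. lam \<sigma>) = 0"
    and "(\<Sum>\<sigma>\<in>{\<sigma>. \<sigma> permutes {1..d} \<and> inv \<sigma> 1 < inv \<sigma> 2}. lam \<sigma>) \<noteq> 0"
    and "linear_map sm \<phi>"
    and "preserves_zeros sm d lam \<phi>"
    and "\<exists>c. c \<noteq> 0 \<and> \<phi> 1 = sm c 1"
    and "a * b = 0" and "b * a = 0"
  shows "\<phi> a * \<phi> b = \<phi> b * \<phi> a"
proof -
  note ua = assms(1)
  obtain c where c: "c \<noteq> 0" "\<phi> 1 = sm c 1" using assms(7) by blast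
  define S where "S = {\<sigma>. \<sigma> permutes {1..d}}"
  define P where "P = (\<lambda>\<sigma>::nat\<Rightarrow>nat. inv \<sigma> 1 < inv \<sigma> 2)"
  have finS: "finite S" unfolding S_def by (rule finite_permutations) simp
  define A where "A = (\<lambda>i::nat. if i = 1 then a else if i = 2 then b else sm (1::'k) (1::'a))"
  have "eval_multilinear sm d lam A = 0"
    unfolding eval_multilinear_def
  proof (rule sum.neutral, rule ballI)
    fix \<sigma> assume "\<sigma> \<in> {\<sigma>. \<sigma> permutes {1..d}}"
    then have s: "\<sigma> permutes {1..d}" by simp
    have "prod_list (map (\<lambda>i. A (\<sigma> i)) [1..<d + 1]) = sm (1 ^ (d - 2)) (if inv \<sigma> 1 < inv \<sigma> 2 then a * b else b * a)"
      unfolding A_def by (rule prod_perm[OF ua s assms(2)])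
    also have "\<dots> = 0" using assms(8,9) ua_zero[OF ua] by simp
    finally show "sm (lam \<sigma>) (prod_list (map (\<lambda>i. A (\<sigma> i)) [1..<d + 1])) = 0"
      using ua_zero[OF ua] by simp
  qed
  then have z: "eval_multilinear sm d lam (\<phi> \<circ> A) = 0"
    using assms(6) unfolding preserves_zeros_def by blast
  have phiA: "\<phi> \<circ> A = (\<lambda>i. if i = 1 then \<phi> a else if i = 2 then \<phi> b else sm c 1)"
    unfolding A_def using c(2) ua_facts(4)[OF ua] by (auto simp: fun_eq_iff)
  define k where "k = c ^ (d - 2)"
  define x where "x = \<phi> a"
  define y where "y = \<phi> b"
  define \<mu> where "\<mu> = (\<Sum>\<sigma>\<in>S \<inter> {\<sigma>. P \<sigma>}. lam \<sigma>)"
  define \<nu> where "\<nu> = (\<Sum>\<sigma>\<in>S \<inter> - {\<sigma>. P \<sigma>}. lam \<sigma>)"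
  have "S \<inter> {\<sigma>. P \<sigma>} = {\<sigma>. \<sigma> permutes {1..d} \<and> inv \<sigma> 1 < inv \<sigma> 2}"
    unfolding S_def P_def by auto
  then have \<mu>0: "\<mu> \<noteq> 0" using assms(4) unfolding \<mu>_def by simp
  have "(\<Sum>\<sigma>\<in>S. lam \<sigma>) = \<mu> + \<nu>" unfolding \<mu>_def \<nu>_def
    using sum.Int_Diff[OF finS, of lam "{\<sigma>. P \<sigma>}"] by (simp add: Diff_eq)
  then have \<nu>: "\<nu> = - \<mu>" using assms(3) unfolding S_def by (simp add: eq_neg_iff_add_eq_0 add.commute)
  have "eval_multilinear sm d lam (\<phi> \<circ> A) =
     (\<Sum>\<sigma>\<in>S. sm (lam \<sigma>) (sm k (if P \<sigma> then x * y else y * x)))"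
    unfolding eval_multilinear_def phiA S_def k_def x_def y_def P_def
  proof (rule sum.cong[OF refl])
    fix \<sigma> assume "\<sigma> \<in> {\<sigma>. \<sigma> permutes {1..d}}"
    then have s: "\<sigma> permutes {1..d}" by simp
    show "sm (lam \<sigma>) (prod_list (map (\<lambda>i. (\<lambda>i. if i = 1 then \<phi> a else if i = 2 then \<phi> b else sm c 1) (\<sigma> i)) [1..<d + 1])) =
      sm (lam \<sigma>) (sm (c ^ (d - 2)) (if inv \<sigma> 1 < inv \<sigma> 2 then \<phi> a * \<phi> b else \<phi> b * \<phi> a))"
      by (subst prod_perm[OF ua s assms(2)]) (rule refl)
  qed
  also have "\<dots> = (\<Sum>\<sigma>\<in>S. sm k (if P \<sigma> then sm (lam \<sigma>) (x * y) else sm (lam \<sigma>) (y * x)))"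
  proof (rule sum.cong)
    fix \<sigma>
    have "sm (lam \<sigma>) (sm k w) = sm k (sm (lam \<sigma>) w)" for w
      using ua_facts(3)[OF ua, of "lam \<sigma>" k w] ua_facts(3)[OF ua, of k "lam \<sigma>" w] by (simp add: mult.commute)
    then show "sm (lam \<sigma>) (sm k (if P \<sigma> then x * y else y * x)) = sm k (if P \<sigma> then sm (lam \<sigma>) (x * y) else sm (lam \<sigma>) (y * x))"
      by simp
  qed simp
  also have "\<dots> = sm k (\<Sum>\<sigma>\<in>S. if P \<sigma> then sm (lam \<sigma>) (x * y) else sm (lam \<sigma>) (y * x))"
    by (rule ua_sum2[OF ua])
  also have "\<dots> = sm k (sm \<mu> (x * y) + sm \<nu> (y * x))"
    unfolding sum.If_cases[OF finS] \<mu>_def \<nu>_def ua_sum[OF ua] ..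
  also have "\<dots> = sm (k * \<mu>) (x * y - y * x)"
    unfolding \<nu> by (simp add: ua_neg[OF ua] ua_facts(3)[OF ua])
  finally have w: "sm (k * \<mu>) (x * y - y * x) = 0" using z by simp
  have "k * \<mu> \<noteq> 0" using c(1) \<mu>0 unfolding k_def by simp
  then have inv1: "inverse (k * \<mu>) * (k * \<mu>) = 1" by (rule left_inverse)
  have "x * y - y * x = sm (inverse (k * \<mu>) * (k * \<mu>)) (x * y - y * x)"
    by (simp only: inv1 ua_facts(4)[OF ua])
  also have "\<dots> = sm (inverse (k * \<mu>)) (sm (k * \<mu>) (x * y - y * x))"
    by (rule ua_facts(3)[OF ua])
  also have "\<dots> = 0" using w ua_zero[OF ua] by simp
  finally show ?thesis unfolding x_def y_def by simp
qed

end
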